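(* For all $t>0$ and $z\in\mathbb{C}$, $$|R(t,z)|\le 2\Lambda\Big(-\frac{\sqrt t}{\sqrt2}\Big)e^{|\mathrm{Re}(z)|}.$$
   Context: $\Lambda(z):=e^{z^2}(1-\mathrm{erf}(z))$ for $z\in\mathbb{C}$; $R(t,z):=e^z\Lambda\big(\frac{z}{2\sqrt{it}}-\sqrt{it}\big)-e^{-z}\Lambda\big(\frac{z}{2\sqrt{it}}+\sqrt{it}\big)$ for $t>0$, $z\in\mathbb{C}$, with principal square roots ($\sqrt{i}=e^{i\pi/4}$). *)

theory Defs
  imports "HOL-Complex_Analysis.Complex_Analysis"
begin

text \<open>Complex error function: erf z = 2/sqrt pi * integral of exp(-w^2) along the segment from 0 to z
  (the entire function; the integral is path independent).\<close>
definition cerf :: "complex \<Rightarrow> complex" where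
  "cerf z = (2 / complex_of_real (sqrt pi)) * contour_integral (linepath 0 z) (\<lambda>w. exp (- (w ^ 2)))"

definition Lam :: "complex \<Rightarrow> complex" where
  "Lam z = exp (z ^ 2) * (1 - cerf z)"

definition RR :: "real \<Rightarrow> complex \<Rightarrow> complex" where
  "RR t z = exp z * Lam (z / (2 * csqrt (\<i> * of_real t)) - csqrt (\<i> * of_real t))
          - exp (- z) * Lam (z / (2 * csqrt (\<i> * of_real t)) + csqrt (\<i> * of_real t))"

end

theory Submission
  imports Defs
begin

lemma F_diff:
  fixes p q :: complex
  shows "contour_integral (linepath p q) (\<lambda>u. exp (- (u^2))) =
         contour_integral (linepath 0 q) (\<lambda>u. exp (- (u^2))) - contour_integral (linepath 0 p) (\<lambda>u. exp (- (u^2)))"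
proof -
  let ?f = "\<lambda>u::complex. exp (- (u^2))"
  have hol: "?f holomorphic_on convex hull {0, p, q}" by (intro holomorphic_intros)
  have "(?f has_contour_integral 0) (linepath 0 p +++ linepath p q +++ linepath q 0)"
    by (rule Cauchy_theorem_triangle[OF hol])
  then have "contour_integral (linepath 0 p) ?f + contour_integral (linepath p q) ?f + contour_integral (linepath q 0) ?f = 0"
    by (rule has_chain_integral_chain_integral3)
  moreover have "contour_integral (linepath q 0) ?f = - contour_integral (linepath 0 q) ?f"
    by (rule contour_integral_reverse_linepath) (intro continuous_intros)
  ultimately show ?thesis by (simp add: algebra_simps eq_neg_iff_add_eq_0)
qed

lemma Lam_lower:
  fixes x :: real
  assumes "x > 0"
  shows "exp (x^2) \<le> cmod (Lam (- complex_of_real x))"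
proof -
  let ?f = "\<lambda>u::complex. exp (- (u^2))"
  have "(\<lambda>s. exp (- (s^2))) integrable_on {-x..0}"
    by (intro integrable_continuous_interval continuous_intros)
  then obtain J where J: "((\<lambda>s. exp (- (s^2))) has_integral J) {-x..0}"
    by blast
  have J0: "J \<ge> 0"
    using has_integral_nonneg[OF J] by simp
  have "((\<lambda>s. complex_of_real (exp (- (s^2)))) has_integral of_real J) {-x..0}"
    using has_integral_of_real[OF J] .
  then have "((\<lambda>s. ?f (of_real s)) has_integral of_real J) {Re (- of_real x)..Re 0}"
    by (simp flip: exp_of_real)
  then have "(?f has_contour_integral of_real J) (linepath (- of_real x) 0)"
    using assms by (subst has_contour_integral_linepath_Reals_iff) auto
  then have "contour_integral (linepath (- of_real x) 0) ?f = of_real J"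
    by (rule contour_integral_unique)
  moreover have "contour_integral (linepath 0 (- of_real x)) ?f = - contour_integral (linepath (- of_real x) 0) ?f"
    by (rule contour_integral_reverse_linepath) (intro continuous_intros)
  ultimately have F: "contour_integral (linepath 0 (- of_real x)) ?f = - of_real J" by simp
  have ex: "exp ((complex_of_real x)^2) = of_real (exp (x^2))"
    by (metis exp_of_real of_real_power)
  have L: "Lam (- complex_of_real x) = of_real (exp (x^2) * (1 + 2 / sqrt pi * J))"
    unfolding Lam_def cerf_def F by (simp add: ex algebra_simps)
  moreover have "exp (x^2) \<le> exp (x^2) * (1 + 2 / sqrt pi * J)"
    using J0 by simp
  moreover have "cmod (Lam (- complex_of_real x)) = \<bar>exp (x^2) * (1 + 2 / sqrt pi * J)\<bar>"
    by (simp only: L norm_of_real)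
  ultimately show ?thesis by linarith
qed

theorem mainTheorem13:
  fixes t :: real and z :: complex
  assumes "t > 0"
  shows "cmod (RR t z) \<le> 2 * cmod (Lam (- complex_of_real (sqrt t / sqrt 2))) * exp \<bar>Re z\<bar>"
proof -
  let ?f = "\<lambda>u::complex. exp (- (u^2))"
  define F where "F u = contour_integral (linepath 0 u) ?f" for u
  define a where "a = csqrt (\<i> * of_real t)"
  define w where "w = z / (2 * a)"
  define c where "c = 2 / complex_of_real (sqrt pi)"
  have a2: "a^2 = \<i> * of_real t" unfolding a_def by simp
  have a0: "a \<noteq> 0" using a2 assms by auto
  have na: "cmod a = sqrt t" unfolding a_def using assms
    by (simp add: norm_mult)
  have zw: "z = 2 * a * w" unfolding w_def using a0 by simp
  have Lm: "\<And>u. Lam u = exp (u^2) * (1 - c * F u)"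
    unfolding Lam_def cerf_def c_def F_def by simp
  have e1: "exp z * exp ((w - a)^2) = exp (w^2 + a^2)"
    by (simp add: zw flip: exp_add) (simp add: power2_eq_square algebra_simps)
  have e2: "exp (-z) * exp ((w + a)^2) = exp (w^2 + a^2)"
    by (simp add: zw flip: exp_add) (simp add: power2_eq_square algebra_simps)
  have R: "RR t z = exp (w^2 + a^2) * c * (F (w + a) - F (w - a))"
  proof -
    have "RR t z = exp z * Lam (w - a) - exp (-z) * Lam (w + a)"
      unfolding RR_def w_def a_def by simp
    also have "\<dots> = (exp z * exp ((w - a)^2)) * (1 - c * F (w - a)) - (exp (-z) * exp ((w + a)^2)) * (1 - c * F (w + a))"
      by (simp add: Lm mult.assoc)
    also have "\<dots> = exp (w^2 + a^2) * c * (F (w + a) - F (w - a))"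
      by (simp only: e1 e2) (simp add: algebra_simps)
    finally show ?thesis .
  qed
  have Fd: "F (w + a) - F (w - a) = contour_integral (linepath (w - a) (w + a)) ?f"
    unfolding F_def by (rule F_diff[symmetric])
  have int: "((\<lambda>u. exp (w^2 + a^2) * ?f u) has_contour_integral
        exp (w^2 + a^2) * contour_integral (linepath (w - a) (w + a)) ?f) (linepath (w - a) (w + a))"
    by (intro has_contour_integral_lmul has_contour_integral_integral contour_integrable_continuous_linepath continuous_intros)
  have bnd: "cmod (exp (w^2 + a^2) * ?f u) \<le> exp \<bar>Re z\<bar>" if u: "u \<in> closed_segment (w - a) (w + a)" for u
  proof -
    obtain s where s: "0 \<le> s" "s \<le> 1" and us: "u = (1 - s) *\<^sub>R (w - a) + s *\<^sub>R (w + a)"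
      using u unfolding closed_segment_def by blast
    define v where "v = 2 * s - 1"
    have v: "\<bar>v\<bar> \<le> 1" using s unfolding v_def by auto
    have uv: "u = w + of_real v * a" unfolding us v_def by (simp add: scaleR_conv_of_real algebra_simps)
    have "exp (w^2 + a^2) * ?f u = exp (w^2 + a^2 - u^2)" by (simp add: exp_diff exp_minus field_simps)
    also have "w^2 + a^2 - u^2 = - z * of_real v + a^2 * (1 - of_real v ^2)"
      unfolding uv zw by (simp add: power2_eq_square algebra_simps)
    also have "\<dots> = - z * of_real v + \<i> * of_real (t * (1 - v^2))"
      by (simp add: a2)
    finally have "cmod (exp (w^2 + a^2) * ?f u) = exp (- Re z * v)"
      by simp
    also have "\<dots> \<le> exp \<bar>Re z\<bar>"
    proof -
      have "- Re z * v \<le> \<bar>Re z\<bar> * \<bar>v\<bar>" by (metis abs_ge_minus_self abs_mult minus_mult_left)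
      also have "\<dots> \<le> \<bar>Re z\<bar>" using v by (simp add: mult_left_le)
      finally show ?thesis by simp
    qed
    finally show ?thesis .
  qed
  have "cmod (exp (w^2 + a^2) * contour_integral (linepath (w - a) (w + a)) ?f) \<le> exp \<bar>Re z\<bar> * cmod ((w + a) - (w - a))"
    by (rule has_contour_integral_bound_linepath[OF int _ bnd]) auto
  also have "cmod ((w + a) - (w - a)) = 2 * sqrt t" by (simp add: na norm_mult)
  finally have I: "cmod (exp (w^2 + a^2) * (F (w + a) - F (w - a))) \<le> exp \<bar>Re z\<bar> * (2 * sqrt t)"
    by (simp add: Fd)
  have nc: "cmod c = 2 / sqrt pi" unfolding c_def by (simp add: norm_divide)
  have "cmod (RR t z) = 2 / sqrt pi * cmod (exp (w^2 + a^2) * (F (w + a) - F (w - a)))"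
    unfolding R by (simp add: norm_mult nc mult.commute mult.left_commute)
  also have "\<dots> \<le> 2 / sqrt pi * (exp \<bar>Re z\<bar> * (2 * sqrt t))"
    by (rule mult_left_mono[OF I]) simp
  also have "\<dots> = 2 * (2 * sqrt t / sqrt pi) * exp \<bar>Re z\<bar>" by simp
  also have "\<dots> \<le> 2 * cmod (Lam (- complex_of_real (sqrt t / sqrt 2))) * exp \<bar>Re z\<bar>"
  proof -
    define x where "x = sqrt t / sqrt 2"
    have x0: "x > 0" unfolding x_def using assms by simp
    have st: "sqrt t = sqrt 2 * x" unfolding x_def by simp
    have "2 * sqrt t / sqrt pi = 2 * x * (sqrt 2 / sqrt pi)" by (simp add: st)
    also have "\<dots> \<le> 2 * x"
    proof -
      have "sqrt 2 \<le> sqrt pi" using pi_gt3 by simp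
      then have h: "sqrt 2 / sqrt pi \<le> 1" by simp
      have "2 * x * (sqrt 2 / sqrt pi) \<le> 2 * x * 1"
        by (rule mult_left_mono[OF h]) (use x0 in simp)
      then show ?thesis by (simp only: mult_1_right)
    qed
    also have "\<dots> \<le> 1 + x^2"
    proof -
      have "0 \<le> (x - 1)^2" by simp
      then show ?thesis by (simp add: power2_eq_square algebra_simps)
    qed
    also have "\<dots> \<le> exp (x^2)" by (rule exp_ge_add_one_self)
    also have "\<dots> \<le> cmod (Lam (- complex_of_real x))" by (rule Lam_lower[OF x0])
    finally have h: "2 * sqrt t / sqrt pi \<le> cmod (Lam (- complex_of_real (sqrt t / sqrt 2)))"
      unfolding x_def .
    show ?thesis by (intro mult_right_mono mult_left_mono h) auto
  qed
  finally show ?thesis .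
qed

end
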